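(* Let $a\in\mathbb{Q}\setminus\{-1,0,1\}$ and let $z\in\mathbb{C}$ with $|z|\le1$. For any positive real numbers $\xi<x$, \begin{multline*} \sum_{\substack{p\le x \\ \nu_p(a)=0}} z^{\omega((p-1)/\mathrm{ord}_p(a))} = \sum_{\ell\mid Q_\xi} \mu^2(\ell) (z-1)^{\omega(\ell)} \#\{ p\le x : \nu_p(a)=0,\ \ell \mid (p-1)/\mathrm{ord}_p(a) \} \\ + O\biggl( \sum_{\xi<q\le x} \#\{ p\le x : \nu_p(a)=0,\ q \mid (p-1)/\mathrm{ord}_p(a) \} \biggr), \end{multline*} with an absolute implied constant.
   Context: $p,q$ denote primes. $\nu_p(a)$ is the $p$-adic valuation of $a$; $\mathrm{ord}_p(a)$ is the multiplicative order of $a$ mod $p$; $\omega(n)$ is the number of distinct prime factors; $\mu$ is the Möbius function. For $\xi>0$, $Q_\xi$ is the least common multiple of all positive integers $\le\xi$. The convention $0^0=1$ is used. *)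

theory Defs
  imports "HOL-Analysis.Analysis" "HOL-Number_Theory.Number_Theory" "HOL-Computational_Algebra.Squarefree"
begin

definition rat_val :: "nat \<Rightarrow> rat \<Rightarrow> int" where
  "rat_val p a = (case quotient_of a of (n, d) \<Rightarrow>
      int (multiplicity (int p) n) - int (multiplicity (int p) d))"

definition rat_residue :: "nat \<Rightarrow> rat \<Rightarrow> nat" where
  "rat_residue p a = (case quotient_of a of (n, d) \<Rightarrow>
      nat ((n * modular_inverse (int p) d) mod int p))"

definition rat_ord :: "nat \<Rightarrow> rat \<Rightarrow> nat" where
  "rat_ord p a = ord p (rat_residue p a)"

definition omega :: "nat \<Rightarrow> nat" where
  "omega n = card (prime_factors n)"

definition mu :: "nat \<Rightarrow> int" where
  "mu n = (if squarefree n then (-1) ^ card (prime_factors n) else 0)"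

definition Q_lcm :: "real \<Rightarrow> nat" where
  "Q_lcm \<xi> = Lcm {1..nat \<lfloor>\<xi>\<rfloor>}"

definition cnt :: "rat \<Rightarrow> real \<Rightarrow> nat \<Rightarrow> nat" where
  "cnt a x l = card {p::nat. prime p \<and> real p \<le> x \<and> rat_val p a = 0 \<and>
                              l dvd (p - 1) div rat_ord p a}"

end

theory Submission imports Defs begin

lemma pow_sum:
  fixes w :: complex
  assumes "finite A"
  shows "(\<Sum>T\<in>Pow A. w ^ card T) = (1 + w) ^ card A"
  using assms
proof (induction A rule: finite_induct)
  case empty
  then show ?case by simp
next
  case (insert a A)
  have disj: "Pow A \<inter> insert a ` Pow A = {}" using insert by auto
  have inj: "inj_on (insert a) (Pow A)" proof (rule inj_onI)
    fix X Y assume "X \<in> Pow A" "Y \<in> Pow A" "insert a X = insert a Y"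
    moreover have "a \<notin> X" "a \<notin> Y" using insert calculation by auto
    ultimately show "X = Y" by (metis Diff_insert_absorb)
  qed
  have "(\<Sum>T\<in>Pow (insert a A). w ^ card T) = (\<Sum>T\<in>Pow A. w ^ card T) + (\<Sum>T\<in>insert a ` Pow A. w ^ card T)"
    unfolding Pow_insert using insert disj by (intro sum.union_disjoint) auto
  also have "(\<Sum>T\<in>insert a ` Pow A. w ^ card T) = (\<Sum>T\<in>Pow A. w ^ card (insert a T))"
    using inj by (simp add: sum.reindex)
  also have "\<dots> = (\<Sum>T\<in>Pow A. w * w ^ card T)"
  proof (intro sum.cong refl)
    fix T assume "T \<in> Pow A"
    then have "finite T" "a \<notin> T" using insert finite_subset by auto
    then show "w ^ card (insert a T) = w * w ^ card T" by simp
  qed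
  also have "\<dots> = w * (1 + w) ^ card A" by (subst sum_distrib_left[symmetric]) (simp only: insert.IH)
  finally show ?case using insert by (simp add: algebra_simps)
qed

lemma sqfree_sum:
  fixes f :: "nat \<Rightarrow> complex"
  assumes m: "m \<noteq> 0"
  shows "(\<Sum>l\<in>{l. l dvd m}. of_int ((mu l)^2) * f l) = (\<Sum>T\<in>Pow (prime_factors m). f (\<Prod>T))"
proof -
  have fin: "finite (prime_factors m)" by simp
  have pfT: "prime_factors (\<Prod>T) = T" if "T \<subseteq> prime_factors m" for T
  proof -
    have fT: "finite T" using that fin finite_subset by blast
    have pr: "\<And>p. p \<in> T \<Longrightarrow> prime p" using that by auto
    have "0 \<notin> id ` T" using pr[of 0] by auto
    then have "prime_factors (\<Prod>T) = \<Union>((prime_factors \<circ> id) ` T)"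
      using prime_factors_prod[OF fT, of id] by simp
    also have "\<dots> = T" using pr by (auto simp: prime_prime_factors)
    finally show ?thesis .
  qed
  have inj: "inj_on Prod (Pow (prime_factors m))"
    by (rule inj_onI) (metis PowD pfT)
  have img: "Prod ` Pow (prime_factors m) = {l. l dvd m \<and> squarefree l}"
  proof (intro equalityI subsetI)
    fix l assume "l \<in> Prod ` Pow (prime_factors m)"
    then obtain T where T: "T \<subseteq> prime_factors m" "l = \<Prod>T" by auto
    have fT: "finite T" using T fin finite_subset by blast
    have pr: "\<And>p. p \<in> T \<Longrightarrow> prime p" using T by auto
    have sq: "squarefree (\<Prod>T)"
    proof -
      have "squarefree (prod id T)"
        by (rule squarefree_prod_coprime) (auto intro: primes_coprime squarefree_prime pr)
      then show ?thesis by simp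
    qed
    have "\<Prod>T dvd \<Prod>(prime_factors m)" using T fin by (intro prod_dvd_prod_subset) auto
    also have "\<Prod>(prime_factors m) dvd (\<Prod>p\<in>prime_factors m. p ^ multiplicity p m)"
      by (intro prod_dvd_prod) (auto simp: prime_factors_multiplicity intro: dvd_power)
    also have "\<dots> = m" using prod_prime_factors[OF m] by simp
    finally show "l \<in> {l. l dvd m \<and> squarefree l}" using T sq by simp
  next
    fix l assume l: "l \<in> {l. l dvd m \<and> squarefree l}"
    then have l0: "l \<noteq> 0" using m by auto
    have "l = (\<Prod>p\<in>prime_factors l. p ^ multiplicity p l)" using prod_prime_factors[OF l0] by simp
    also have "\<dots> = \<Prod>(prime_factors l)"
      using l l0 squarefree_factorial_semiring'[OF l0] by (intro prod.cong) auto
    finally have "l = \<Prod>(prime_factors l)" .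
    moreover have "prime_factors l \<subseteq> prime_factors m" using l m by (intro dvd_prime_factors) auto
    ultimately show "l \<in> Prod ` Pow (prime_factors m)" by blast
  qed
  have "(\<Sum>l\<in>{l. l dvd m}. of_int ((mu l)^2) * f l) = (\<Sum>l\<in>{l. l dvd m \<and> squarefree l}. of_int ((mu l)^2) * f l)"
    using m by (intro sum.mono_neutral_cong_right) (auto simp: mu_def)
  also have "\<dots> = (\<Sum>l\<in>{l. l dvd m \<and> squarefree l}. f l)"
    by (intro sum.cong) (auto simp: mu_def power2_eq_square power_mult_distrib[symmetric])
  also have "\<dots> = (\<Sum>T\<in>Pow (prime_factors m). f (\<Prod>T))"
    unfolding img[symmetric] using inj by (simp add: sum.reindex)
  finally show ?thesis .
qed

lemma sqfree_sum2:
  fixes w :: complex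
  assumes m: "m \<noteq> 0"
  shows "(\<Sum>l\<in>{l. l dvd m}. of_int ((mu l)^2) * w ^ omega l) = (1 + w) ^ omega m"
proof -
  have "(\<Sum>l\<in>{l. l dvd m}. of_int ((mu l)^2) * w ^ omega l) = (\<Sum>T\<in>Pow (prime_factors m). w ^ omega (\<Prod>T))"
    using sqfree_sum[OF m, of "\<lambda>l. w ^ omega l"] by simp
  also have "\<dots> = (\<Sum>T\<in>Pow (prime_factors m). w ^ card T)"
  proof (intro sum.cong refl)
    fix T assume T: "T \<in> Pow (prime_factors m)"
    have fT: "finite T" using T finite_subset by (metis PowD finite_set_mset)
    have pr: "\<And>p. p \<in> T \<Longrightarrow> prime p" using T by auto
    have "0 \<notin> id ` T" using pr[of 0] by auto
    then have "prime_factors (\<Prod>T) = \<Union>((prime_factors \<circ> id) ` T)"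
      using prime_factors_prod[OF fT, of id] by simp
    also have "\<dots> = T" using pr by (auto simp: prime_prime_factors)
    finally show "w ^ omega (\<Prod>T) = w ^ card T" by (simp add: omega_def)
  qed
  also have "\<dots> = (1 + w) ^ omega m" by (simp add: pow_sum omega_def)
  finally show ?thesis .
qed


lemma res_coprime:
  assumes a: "a \<noteq> 0" and p: "prime p" and v: "rat_val p a = 0"
  shows "coprime p (rat_residue p a)"
proof -
  obtain n d where nd: "quotient_of a = (n, d)" by (cases "quotient_of a") auto
  have d0: "d > 0" using nd quotient_of_denom_pos by blast
  have cop: "coprime n d" using nd quotient_of_coprime by blast
  have aq: "a = of_int n / of_int d" using nd quotient_of_div by blast
  have n0: "n \<noteq> 0" using a aq by auto
  have pi: "prime (int p)" using p by simp
  have m: "multiplicity (int p) n = multiplicity (int p) d"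
    using v nd by (simp add: rat_val_def)
  have nu: "\<not> is_unit (int p)" using pi not_prime_unit by blast
  have nd_d: "\<not> int p dvd d"
  proof
    assume "int p dvd d"
    have "d \<noteq> 0" using d0 by simp
    from multiplicity_gt_zero_iff[OF this nu] \<open>int p dvd d\<close>
    have "multiplicity (int p) d > 0" by blast
    then have "int p dvd n" using m multiplicity_gt_zero_iff[OF n0 nu] by simp
    with \<open>int p dvd d\<close> cop pi show False
      by (meson coprime_common_divisor not_prime_unit)
  qed
  moreover have "d \<noteq> 0" using d0 by simp
  ultimately have "multiplicity (int p) d = 0" using multiplicity_eq_zero_iff[of d "int p"] nu by blast
  then have nd_n: "\<not> int p dvd n" using m multiplicity_eq_zero_iff[OF n0 nu] by simp
  have cd: "coprime d (int p)" using nd_d pi by (meson coprime_commute prime_imp_coprime)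
  define iv where "iv = modular_inverse (int p) d"
  have inv: "[d * iv = 1] (mod int p)" using cong_modular_inverse1[OF cd] iv_def by simp
  have pp: "int p > 0" using p prime_gt_0_nat by simp
  have r: "int (rat_residue p a) = (n * iv) mod int p"
    using nd pp by (simp add: rat_residue_def iv_def)
  have "\<not> p dvd rat_residue p a"
  proof
    assume "p dvd rat_residue p a"
    then have "int p dvd (n * iv) mod int p" using r by (metis int_dvd_int_iff)
    then have "int p dvd n * iv" by (simp add: dvd_mod_iff)
    then have "int p dvd n * iv * d" by simp
    moreover have "[n * iv * d = n * 1] (mod int p)"
      using inv by (metis cong_scalar_left mult.assoc mult.commute)
    ultimately have "int p dvd n" by (simp add: cong_dvd_iff)
    with nd_n show False by simp
  qed
  then show ?thesis using p by (simp add: prime_imp_coprime)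
qed

lemma n_bounds:
  assumes a: "a \<noteq> 0" and p: "prime p" and v: "rat_val p a = 0"
  shows "1 \<le> (p - 1) div rat_ord p a \<and> (p - 1) div rat_ord p a \<le> p - 1"
proof -
  have c: "coprime p (rat_residue p a)" using res_coprime[OF assms] .
  have o0: "rat_ord p a > 0" using c by (simp add: rat_ord_def)
  have "rat_ord p a dvd totient p" using order_divides_totient[OF c] by (simp add: rat_ord_def)
  then have "rat_ord p a dvd p - 1" using p by (simp add: totient_prime)
  moreover have "p - 1 > 0" using p prime_gt_1_nat by simp
  ultimately have "rat_ord p a \<le> p - 1" by (simp add: dvd_imp_le)
  then have "1 \<le> (p - 1) div rat_ord p a" using o0 by (simp add: Suc_le_eq div_greater_zero_iff)
  moreover have "(p - 1) div rat_ord p a \<le> p - 1" by simp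
  ultimately show ?thesis by simp
qed

lemma Q_nz: "Q_lcm \<xi> \<noteq> 0"
  by (simp add: Q_lcm_def Lcm_0_iff)

lemma Q_prime_dvd:
  assumes q: "prime q"
  shows "q dvd Q_lcm \<xi> \<longleftrightarrow> real q \<le> \<xi>"
proof
  assume h: "q dvd Q_lcm \<xi>"
  have "Q_lcm \<xi> dvd fact (nat \<lfloor>\<xi>\<rfloor>)"
    unfolding Q_lcm_def by (intro Lcm_least) (auto intro: dvd_fact)
  then have "q dvd fact (nat \<lfloor>\<xi>\<rfloor>)" using h dvd_trans by blast
  then have "q \<le> nat \<lfloor>\<xi>\<rfloor>" using q prime_dvd_fact_iff by blast
  moreover have "q > 0" using q prime_gt_0_nat by simp
  ultimately have "int q \<le> \<lfloor>\<xi>\<rfloor>" by linarith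
  then show "real q \<le> \<xi>" by (simp add: le_floor_iff)
next
  assume "real q \<le> \<xi>"
  then have "q \<le> nat \<lfloor>\<xi>\<rfloor>" by (simp add: le_nat_floor)
  moreover have "q \<ge> 1" using q prime_gt_0_nat by (simp add: Suc_leI)
  ultimately show "q dvd Q_lcm \<xi>" unfolding Q_lcm_def by (intro dvd_Lcm) auto
qed


lemma card_filter_sum:
  assumes "finite S"
  shows "(of_nat (card {p\<in>S. P p}) :: 'a::semiring_1) = (\<Sum>p\<in>S. if P p then 1 else 0)"
  using sum.inter_filter[OF assms, of "\<lambda>_. (1::'a)" P] by simp

lemma per_p:
  fixes z :: complex and n Q :: nat
  assumes n0: "n \<noteq> 0" and Q0: "Q \<noteq> 0" and cz: "cmod z \<le> 1"
    and hQ: "\<And>q. prime q \<Longrightarrow> q dvd Q \<longleftrightarrow> real q \<le> \<xi>" and nx: "real n \<le> x"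
  shows "cmod (z ^ omega n - (\<Sum>l\<in>{l. l dvd Q}. if l dvd n then of_int ((mu l)^2) * (z - 1) ^ omega l else 0))
         \<le> 2 * real (card {q. prime q \<and> \<xi> < real q \<and> real q \<le> x \<and> q dvd n})"
proof -
  define g where "g = gcd Q n"
  have g0: "g \<noteq> 0" using Q0 g_def by simp
  have finQ: "finite {l. l dvd Q}" using Q0 by simp
  have "(\<Sum>l\<in>{l. l dvd Q}. if l dvd n then of_int ((mu l)^2) * (z - 1) ^ omega l else 0)
      = (\<Sum>l\<in>{l\<in>{l. l dvd Q}. l dvd n}. of_int ((mu l)^2) * (z - 1) ^ omega l)"
    by (rule sum.inter_filter[OF finQ, symmetric])
  also have "{l\<in>{l. l dvd Q}. l dvd n} = {l. l dvd g}" by (auto simp: g_def)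
  also have "(\<Sum>l\<in>{l. l dvd g}. of_int ((mu l)^2) * (z - 1) ^ omega l) = z ^ omega g"
    using sqfree_sum2[OF g0, of "z - 1"] by simp
  finally have eq: "(\<Sum>l\<in>{l. l dvd Q}. if l dvd n then of_int ((mu l)^2) * (z - 1) ^ omega l else 0) = z ^ omega g" .
  have finq: "finite {q. prime q \<and> \<xi> < real q \<and> real q \<le> x \<and> q dvd n}"
    by (rule finite_subset[of _ "{..n}"]) (use n0 in \<open>auto intro: dvd_imp_le\<close>)
  show ?thesis
  proof (cases "omega n = omega g")
    case True
    then show ?thesis using eq by simp
  next
    case False
    have pfg: "prime_factors g = prime_factors Q \<inter> prime_factors n" using Q0 n0 g_def by simp
    then have "prime_factors n \<noteq> prime_factors g" using False by (auto simp: omega_def)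
    then obtain q where q: "q \<in> prime_factors n" "q \<notin> prime_factors Q" using pfg by blast
    have qp: "prime q" "q dvd n" using q(1) by auto
    have "\<not> q dvd Q" using q(2) qp Q0 by (auto simp: in_prime_factors_iff)
    then have "\<xi> < real q" using hQ[OF qp(1)] by simp
    moreover have "real q \<le> x" using dvd_imp_le[OF qp(2)] n0 nx by (meson of_nat_le_iff order_trans not_gr_zero)
    ultimately have "q \<in> {q. prime q \<and> \<xi> < real q \<and> real q \<le> x \<and> q dvd n}" using qp by simp
    then have c1: "card {q. prime q \<and> \<xi> < real q \<and> real q \<le> x \<and> q dvd n} \<ge> 1"
      using finq by (metis One_nat_def Suc_leI card_gt_0_iff empty_iff)
    have "cmod (z ^ omega n - z ^ omega g) \<le> cmod (z ^ omega n) + cmod (z ^ omega g)" by (rule norm_triangle_ineq4)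
    also have "\<dots> \<le> 1 + 1" using cz by (intro add_mono) (auto simp: norm_power power_le_one)
    also have "\<dots> \<le> 2 * real (card {q. prime q \<and> \<xi> < real q \<and> real q \<le> x \<and> q dvd n})" using c1 by simp
    finally show ?thesis using eq by simp
  qed
qed

theorem proposition2p3:
  "\<exists>C::real. \<forall>(a::rat) (z::complex) (\<xi>::real) (x::real).
     a \<notin> {-1, 0, 1} \<and> cmod z \<le> 1 \<and> 0 < \<xi> \<and> \<xi> < x \<longrightarrow>
     cmod ((\<Sum>p\<in>{p::nat. prime p \<and> real p \<le> x \<and> rat_val p a = 0}.
               z ^ omega ((p - 1) div rat_ord p a))
         - (\<Sum>l\<in>{l::nat. l dvd Q_lcm \<xi>}.
               of_int ((mu l)^2) * (z - 1) ^ omega l * of_nat (cnt a x l)))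
     \<le> C * (\<Sum>q\<in>{q::nat. prime q \<and> \<xi> < real q \<and> real q \<le> x}. real (cnt a x q))"
proof (intro exI[of _ 2] allI impI)
  fix a :: rat and z :: complex and \<xi> x :: real
  assume h: "a \<notin> {-1, 0, 1} \<and> cmod z \<le> 1 \<and> 0 < \<xi> \<and> \<xi> < x"
  then have a0: "a \<noteq> 0" and cz: "cmod z \<le> 1" by auto
  define S where "S = {p::nat. prime p \<and> real p \<le> x \<and> rat_val p a = 0}"
  define N where "N p = (p - 1) div rat_ord p a" for p
  define Qs where "Qs = {q::nat. prime q \<and> \<xi> < real q \<and> real q \<le> x}"
  define L where "L = {l::nat. l dvd Q_lcm \<xi>}"
  define c where "c l = (of_int ((mu l)^2) * (z - 1) ^ omega l :: complex)" for l
  have finS: "finite S"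
    by (rule finite_subset[of _ "{..nat \<lfloor>x\<rfloor>}"]) (auto simp: S_def le_nat_floor)
  have finQs: "finite Qs"
    by (rule finite_subset[of _ "{..nat \<lfloor>x\<rfloor>}"]) (auto simp: Qs_def le_nat_floor)
  have finL: "finite L" using Q_nz[of \<xi>] by (simp add: L_def)
  have cnt_eq: "cnt a x l = card {p\<in>S. l dvd N p}" for l
    unfolding cnt_def S_def N_def by (rule arg_cong[of _ _ card]) auto
  have "(\<Sum>l\<in>L. c l * of_nat (cnt a x l)) = (\<Sum>l\<in>L. c l * (\<Sum>p\<in>S. if l dvd N p then 1 else 0))"
    unfolding cnt_eq by (simp only: card_filter_sum[OF finS])
  also have "\<dots> = (\<Sum>l\<in>L. \<Sum>p\<in>S. if l dvd N p then c l else 0)"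
    by (simp add: sum_distrib_left if_distrib cong: if_cong)
  also have "\<dots> = (\<Sum>p\<in>S. \<Sum>l\<in>L. if l dvd N p then c l else 0)"
    by (rule sum.swap)
  finally have e1: "(\<Sum>l\<in>L. c l * of_nat (cnt a x l)) = (\<Sum>p\<in>S. \<Sum>l\<in>L. if l dvd N p then c l else 0)" .
  have "cmod ((\<Sum>p\<in>S. z ^ omega (N p)) - (\<Sum>l\<in>L. c l * of_nat (cnt a x l)))
      = cmod (\<Sum>p\<in>S. z ^ omega (N p) - (\<Sum>l\<in>L. if l dvd N p then c l else 0))"
    unfolding e1 by (simp add: sum_subtractf)
  also have "\<dots> \<le> (\<Sum>p\<in>S. cmod (z ^ omega (N p) - (\<Sum>l\<in>L. if l dvd N p then c l else 0)))"
    by (rule norm_sum)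
  also have "\<dots> \<le> (\<Sum>p\<in>S. 2 * real (card {q. prime q \<and> \<xi> < real q \<and> real q \<le> x \<and> q dvd N p}))"
  proof (rule sum_mono)
    fix p assume p: "p \<in> S"
    then have pp: "prime p" and px: "real p \<le> x" and v: "rat_val p a = 0" by (auto simp: S_def)
    have nb: "1 \<le> N p \<and> N p \<le> p - 1" using n_bounds[OF a0 pp v] by (simp add: N_def)
    have "real (N p) \<le> x" using nb px by (meson le_diff_conv le_trans of_nat_le_iff le_add1 order.trans diff_le_self)
    then show "cmod (z ^ omega (N p) - (\<Sum>l\<in>L. if l dvd N p then c l else 0))
       \<le> 2 * real (card {q. prime q \<and> \<xi> < real q \<and> real q \<le> x \<and> q dvd N p})"
      unfolding L_def c_def using nb
      by (intro per_p[OF _ Q_nz cz]) (auto simp: Q_prime_dvd)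
  qed
  also have "\<dots> = 2 * (\<Sum>p\<in>S. \<Sum>q\<in>Qs. if q dvd N p then 1 else 0)"
  proof -
    have "real (card {q. prime q \<and> \<xi> < real q \<and> real q \<le> x \<and> q dvd N p}) = (\<Sum>q\<in>Qs. if q dvd N p then 1 else 0)" for p
    proof -
      have "{q. prime q \<and> \<xi> < real q \<and> real q \<le> x \<and> q dvd N p} = {q\<in>Qs. q dvd N p}" by (auto simp: Qs_def)
      then show ?thesis using card_filter_sum[OF finQs, of "\<lambda>q. q dvd N p"] by simp
    qed
    then show ?thesis by (simp add: sum_distrib_left)
  qed
  also have "\<dots> = 2 * (\<Sum>q\<in>Qs. \<Sum>p\<in>S. if q dvd N p then 1 else 0)"
    by (subst sum.swap) simp
  also have "\<dots> = 2 * (\<Sum>q\<in>Qs. real (cnt a x q))"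
    unfolding cnt_eq by (simp only: card_filter_sum[OF finS])
  finally show "cmod ((\<Sum>p\<in>{p::nat. prime p \<and> real p \<le> x \<and> rat_val p a = 0}.
               z ^ omega ((p - 1) div rat_ord p a))
         - (\<Sum>l\<in>{l::nat. l dvd Q_lcm \<xi>}.
               of_int ((mu l)^2) * (z - 1) ^ omega l * of_nat (cnt a x l)))
     \<le> 2 * (\<Sum>q\<in>{q::nat. prime q \<and> \<xi> < real q \<and> real q \<le> x}. real (cnt a x q))"
    unfolding S_def N_def Qs_def L_def c_def .
qed

end
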